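(* Let $p$ be any probability distribution on $\mathbb{N}$, let $\delta>0$ and let $k\ge2$ be an integer. Let $X_1^n$ be generated i.i.d. with marginal $p$ and let $q=q(X^n)$ be the empirical distribution of $X_1^n$. Then \[p\Big(|q(X^n)-p|_1>\delta\ \text{ and }\ 2F_q^{-1}(1-\delta/6)\le k\Big)\le(2^k-2)\exp\Big(-\frac{n\delta^2}{18}\Big).\]
   Context: $|\cdot|_1$ is the $\ell_1$ distance. For a distribution $r$ on $\mathbb{N}$, the (non-standard) cumulative distribution function $F_r:\mathbb{R}^+\cup\{\infty\}\to[0,1]$ is defined as the usual CDF $F_r(y)=r(\{0,\ldots,y\})$ at support points $y$ of $r$, by linear interpolation between consecutive support points, and $F_r(\infty)=1$; $F_r^{-1}:[0,1]\to\mathbb{R}^+\cup\{\infty\}$ is its inverse, with $F_r^{-1}(x)=0$ for $0\le x<F_r(0)$, $F_r^{-1}(1)=\infty$ if $r$ has infinite support, and otherwise $F_r^{-1}(1)$ the smallest natural number $y$ with $F_r(y)=1$. *)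

theory Defs
  imports "HOL-Probability.Probability"
begin

definition cdf_nodes :: "(nat \<Rightarrow> real) \<Rightarrow> nat set" where
  "cdf_nodes r = insert 0 {y. r y > 0}"

definition cdf_nat :: "(nat \<Rightarrow> real) \<Rightarrow> nat \<Rightarrow> real" where
  "cdf_nat r y = (\<Sum>i\<le>y. r i)"

text \<open>The non-standard CDF F_r on [0,oo): usual CDF at nodes, linear interpolation
  between consecutive nodes, and constant (= 1 for a distribution) after the last node
  when the support is finite.\<close>
definition Fcdf :: "(nat \<Rightarrow> real) \<Rightarrow> real \<Rightarrow> real" where
  "Fcdf r y =
     (let a = Max {n \<in> cdf_nodes r. real n \<le> y} in
      if \<exists>b \<in> cdf_nodes r. real b > y then
        (let b = (LEAST b. b \<in> cdf_nodes r \<and> real b > y) in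
          cdf_nat r a + (y - real a) / (real b - real a) * (cdf_nat r b - cdf_nat r a))
      else cdf_nat r a)"

definition Finv :: "(nat \<Rightarrow> real) \<Rightarrow> real \<Rightarrow> ereal" where
  "Finv r x =
     (if x < Fcdf r 0 then 0
      else if x = 1 then
        (if infinite {y. r y > 0} then \<infinity>
         else ereal (real (LEAST y::nat. Fcdf r (real y) = 1)))
      else ereal (THE y. y \<ge> 0 \<and> Fcdf r y = x))"

definition empirical :: "nat \<Rightarrow> (nat \<Rightarrow> nat) \<Rightarrow> nat \<Rightarrow> real" where
  "empirical n X x = real (card {i \<in> {..<n}. X i = x}) / real n"

definition l1_dist :: "(nat \<Rightarrow> real) \<Rightarrow> nat pmf \<Rightarrow> real" where
  "l1_dist q p = (\<Sum>x. \<bar>q x - pmf p x\<bar>)"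

end

theory Submission
  imports Defs
begin


context
  fixes r :: "nat \<Rightarrow> real" and L :: nat
  assumes r_nonneg: "\<And>j. r j \<ge> 0"
    and r_supp: "\<And>j. j > L \<Longrightarrow> r j = 0"
    and r_tot: "cdf_nat r L = 1"
begin

lemma cdf_mono: "m \<le> m' \<Longrightarrow> cdf_nat r m \<le> cdf_nat r m'"
  unfolding cdf_nat_def by (rule sum_mono2) (auto simp: r_nonneg)

lemma cdf_flat:
  assumes "a \<le> m" "\<And>i. a < i \<Longrightarrow> i \<le> m \<Longrightarrow> r i = 0"
  shows "cdf_nat r m = cdf_nat r a"
proof -
  have "{..m} = {..a} \<union> {a<..m}" using assms(1) by auto
  hence "cdf_nat r m = (\<Sum>i\<in>{..a}. r i) + (\<Sum>i\<in>{a<..m}. r i)"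
    unfolding cdf_nat_def by (simp add: sum.union_disjoint ivl_disj_int)
  also have "(\<Sum>i\<in>{a<..m}. r i) = 0" using assms(2) by (intro sum.neutral) auto
  finally show ?thesis by (simp add: cdf_nat_def)
qed

lemma cdf_ge_L: "m \<ge> L \<Longrightarrow> cdf_nat r m = 1"
  using cdf_flat[of L m] r_supp r_tot by auto

lemma cdf_le1: "cdf_nat r m \<le> 1"
  using cdf_mono[of m "max m L"] cdf_ge_L[of "max m L"] by auto

lemma cdf_nonneg: "cdf_nat r m \<ge> 0"
  unfolding cdf_nat_def by (intro sum_nonneg) (auto simp: r_nonneg)

lemma nodes_finite: "finite (cdf_nodes r)"
proof -
  have "cdf_nodes r \<subseteq> {..L}" unfolding cdf_nodes_def
    by (auto, metis not_le order_less_irrefl r_supp)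
  thus ?thesis by (rule finite_subset) auto
qed

lemma node_pos: "b \<in> cdf_nodes r \<Longrightarrow> b \<noteq> 0 \<Longrightarrow> r b > 0"
  unfolding cdf_nodes_def by auto

lemma pos_node: "r j > 0 \<Longrightarrow> j \<in> cdf_nodes r"
  unfolding cdf_nodes_def by auto

lemma zero_node: "0 \<in> cdf_nodes r"
  unfolding cdf_nodes_def by auto

lemma node_cases: "j \<in> cdf_nodes r \<Longrightarrow> j = 0 \<or> r j > 0"
  unfolding cdf_nodes_def by auto

lemma F_eval:
  assumes a: "a \<in> cdf_nodes r" and b: "b \<in> cdf_nodes r" and ay: "real a \<le> y" and yb: "y < real b"
    and gap: "\<And>j. a < j \<Longrightarrow> j < b \<Longrightarrow> r j = 0"
  shows "Fcdf r y = cdf_nat r a + (y - real a) / (real b - real a) * (cdf_nat r b - cdf_nat r a)"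
proof -
  have y0: "y \<ge> 0" using ay of_nat_0_le_iff[of a] by linarith
  have M: "Max {n \<in> cdf_nodes r. real n \<le> y} = a"
  proof (rule Max_eqI)
    show "finite {n \<in> cdf_nodes r. real n \<le> y}" using nodes_finite by auto
    show "a \<in> {n \<in> cdf_nodes r. real n \<le> y}" using a ay by auto
    fix n assume n: "n \<in> {n \<in> cdf_nodes r. real n \<le> y}"
    show "n \<le> a"
    proof (rule ccontr)
      assume "\<not> n \<le> a"
      hence "a < n" by simp
      moreover have "n < b" using n yb by auto
      ultimately have "r n = 0" using gap by auto
      moreover have "n \<noteq> 0" using \<open>a < n\<close> by simp
      ultimately show False using node_pos n by fastforce
    qed
  qed
  have ex: "\<exists>b \<in> cdf_nodes r. real b > y" using b yb by auto
  have LB: "(LEAST b. b \<in> cdf_nodes r \<and> real b > y) = b"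
  proof (rule Least_equality)
    show "b \<in> cdf_nodes r \<and> real b > y" using b yb by auto
    fix m assume m: "m \<in> cdf_nodes r \<and> real m > y"
    show "b \<le> m"
    proof (rule ccontr)
      assume "\<not> b \<le> m"
      hence "m < b" by simp
      moreover have "a < m" using m ay by auto
      ultimately have "r m = 0" using gap by auto
      moreover have "m \<noteq> 0" using \<open>a < m\<close> by simp
      ultimately show False using node_pos m by fastforce
    qed
  qed
  show ?thesis unfolding Fcdf_def Let_def M LB using ex by simp
qed

lemma F_struct:
  assumes y0: "y \<ge> 0"
  shows "(\<exists>a. a \<in> cdf_nodes r \<and> real a \<le> y \<and> (\<forall>j. a < j \<longrightarrow> r j = 0) \<and> Fcdf r y = cdf_nat r a)
       \<or> (\<exists>a b. a \<in> cdf_nodes r \<and> b \<in> cdf_nodes r \<and> real a \<le> y \<and> y < real b \<and>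
            (\<forall>j. a < j \<and> j < b \<longrightarrow> r j = 0) \<and>
            Fcdf r y = cdf_nat r a + (y - real a) / (real b - real a) * (cdf_nat r b - cdf_nat r a))"
proof -
  define S where "S = {n \<in> cdf_nodes r. real n \<le> y}"
  define a where "a = Max S"
  have Sfin: "finite S" unfolding S_def using nodes_finite by auto
  have "0 \<in> S" unfolding S_def using zero_node y0 by auto
  hence "S \<noteq> {}" by auto
  hence aS: "a \<in> S" unfolding a_def using Sfin Max_in[of S] by auto
  have amax: "\<And>n. n \<in> S \<Longrightarrow> n \<le> a"
    unfolding a_def using Sfin Max_ge[of S] by auto
  show ?thesis
  proof (cases "\<exists>b \<in> cdf_nodes r. real b > y")
    case True
    define b where "b = (LEAST b. b \<in> cdf_nodes r \<and> real b > y)"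
    have bP: "b \<in> cdf_nodes r \<and> real b > y"
      unfolding b_def using True by (metis (mono_tags, lifting) LeastI)
    have bmin: "\<And>m. m \<in> cdf_nodes r \<Longrightarrow> real m > y \<Longrightarrow> b \<le> m"
      unfolding b_def by (simp add: Least_le)
    have gap: "\<forall>j. a < j \<and> j < b \<longrightarrow> r j = 0"
    proof (intro allI impI)
      fix j assume j: "a < j \<and> j < b"
      show "r j = 0"
      proof (rule ccontr)
        assume "r j \<noteq> 0"
        hence "r j > 0" using r_nonneg[of j] by simp
        hence jn: "j \<in> cdf_nodes r" by (rule pos_node)
        show False
        proof (cases "real j \<le> y")
          case True thus False using amax[of j] jn j unfolding S_def by auto
        next
          case False thus False using bmin[of j] jn j by auto
        qed
      qed
    qed
    have "Fcdf r y = cdf_nat r a + (y - real a) / (real b - real a) * (cdf_nat r b - cdf_nat r a)"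
      using aS bP gap by (intro F_eval) (auto simp: S_def)
    thus ?thesis using aS bP gap unfolding S_def by blast
  next
    case False
    have "Fcdf r y = cdf_nat r a"
      unfolding Fcdf_def Let_def a_def S_def using False by simp
    moreover have "\<forall>j. a < j \<longrightarrow> r j = 0"
    proof (intro allI impI)
      fix j assume j: "a < j"
      show "r j = 0"
      proof (rule ccontr)
        assume "r j \<noteq> 0"
        hence "r j > 0" using r_nonneg[of j] by simp
        hence jn: "j \<in> cdf_nodes r" by (rule pos_node)
        hence "real j \<le> y" using False by auto
        thus False using amax[of j] jn j unfolding S_def by auto
      qed
    qed
    ultimately show ?thesis using aS unfolding S_def by blast
  qed
qed


lemma F0: "Fcdf r 0 = r 0"
proof -
  have c0: "cdf_nat r 0 = r 0" by (simp add: cdf_nat_def)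
  have "0 \<le> (0::real)" by simp
  from F_struct[OF this] show ?thesis
  proof (elim disjE exE conjE)
    fix a assume "real a \<le> 0" "Fcdf r 0 = cdf_nat r a"
    thus ?thesis using c0 by simp
  next
    fix a b assume "real a \<le> 0" "Fcdf r 0 = cdf_nat r a + (0 - real a) / (real b - real a) * (cdf_nat r b - cdf_nat r a)"
    thus ?thesis using c0 by simp
  qed
qed

lemma cdf_le_gap:
  assumes "\<And>i. a < i \<Longrightarrow> i \<le> m \<Longrightarrow> r i = 0"
  shows "cdf_nat r m \<le> cdf_nat r a"
proof (cases "m \<le> a")
  case True thus ?thesis by (rule cdf_mono)
next
  case False thus ?thesis using cdf_flat[of a m] assms by simp
qed

lemma Fge:
  assumes y0: "y \<ge> 0" and my: "real m \<le> y"
  shows "cdf_nat r m \<le> Fcdf r y"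
  using F_struct[OF y0]
proof (elim disjE exE conjE)
  fix a assume "real a \<le> y" "\<forall>j. a < j \<longrightarrow> r j = 0" "Fcdf r y = cdf_nat r a"
  thus ?thesis using cdf_le_gap[of a m] by auto
next
  fix a b assume ab: "real a \<le> y" "y < real b" "\<forall>j. a < j \<and> j < b \<longrightarrow> r j = 0"
    "Fcdf r y = cdf_nat r a + (y - real a) / (real b - real a) * (cdf_nat r b - cdf_nat r a)"
  have "cdf_nat r m \<le> cdf_nat r a"
    using ab my by (intro cdf_le_gap) auto
  moreover have "a < b" using ab by linarith
  hence "cdf_nat r a \<le> cdf_nat r b" by (intro cdf_mono) simp
  moreover have "(y - real a) / (real b - real a) \<ge> 0" using ab by auto
  ultimately have "(y - real a) / (real b - real a) * (cdf_nat r b - cdf_nat r a) \<ge> 0"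
    by (intro mult_nonneg_nonneg) auto
  thus ?thesis using ab(4) \<open>cdf_nat r m \<le> cdf_nat r a\<close> by linarith
qed

lemma gap_cdf:
  assumes "a < b" "\<And>j. a < j \<Longrightarrow> j < b \<Longrightarrow> r j = 0"
  shows "cdf_nat r b = cdf_nat r a + r b"
proof -
  obtain c where bc: "b = Suc c" using assms(1) by (cases b) auto
  have "cdf_nat r c = cdf_nat r a"
    using assms bc by (intro cdf_flat) auto
  moreover have "cdf_nat r b = cdf_nat r c + r b"
    unfolding cdf_nat_def bc by simp
  ultimately show ?thesis by simp
qed

lemma F_unique_aux:
  assumes y1: "0 \<le> y1" and lt: "y1 < y2" and x: "x < 1"
    and f1: "Fcdf r y1 = x" and f2: "Fcdf r y2 = x"
  shows False
  using F_struct[OF y1]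
proof (elim disjE exE conjE)
  fix a assume "\<forall>j. a < j \<longrightarrow> r j = 0" "Fcdf r y1 = cdf_nat r a"
  moreover have "cdf_nat r (max a L) = 1" by (rule cdf_ge_L) simp
  ultimately have "Fcdf r y1 = 1" using cdf_flat[of a "max a L"] by auto
  thus False using f1 x by simp
next
  fix a b assume a: "a \<in> cdf_nodes r" and b: "b \<in> cdf_nodes r" and ab: "real a \<le> y1" "y1 < real b"
    and gap: "\<forall>j. a < j \<and> j < b \<longrightarrow> r j = 0"
    and F1: "Fcdf r y1 = cdf_nat r a + (y1 - real a) / (real b - real a) * (cdf_nat r b - cdf_nat r a)"
  have altb: "a < b" using ab by linarith
  have "b \<noteq> 0" using ab y1 by auto
  hence rb: "r b > 0" using node_pos b by simp
  have cb: "cdf_nat r b = cdf_nat r a + r b" using altb gap by (intro gap_cdf) auto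
  have dpos: "real b - real a > 0" using altb by simp
  show False
  proof (cases "y2 < real b")
    case True
    have F2: "Fcdf r y2 = cdf_nat r a + (y2 - real a) / (real b - real a) * (cdf_nat r b - cdf_nat r a)"
      using a b ab lt True gap by (intro F_eval) auto
    have "(y1 - real a) / (real b - real a) < (y2 - real a) / (real b - real a)"
      using lt dpos by (intro divide_strict_right_mono) auto
    hence "(y1 - real a) / (real b - real a) * r b < (y2 - real a) / (real b - real a) * r b"
      using rb by (rule mult_strict_right_mono)
    hence "Fcdf r y1 < Fcdf r y2" unfolding F1 F2 cb by simp
    thus False using f1 f2 by simp
  next
    case False
    hence "cdf_nat r b \<le> Fcdf r y2" using y1 lt by (intro Fge) auto
    moreover have "(y1 - real a) / (real b - real a) < 1" using ab dpos by simp
    hence "(y1 - real a) / (real b - real a) * r b < 1 * r b" using rb by (rule mult_strict_right_mono)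
    hence "Fcdf r y1 < cdf_nat r b" unfolding F1 cb by simp
    ultimately show False using f1 f2 by simp
  qed
qed

lemma F_exists:
  assumes x0: "r 0 \<le> x" and x1: "x < 1"
  shows "\<exists>y\<ge>0. Fcdf r y = x"
proof -
  define b where "b = (LEAST b. cdf_nat r b > x)"
  have "cdf_nat r L > x" using r_tot x1 by simp
  hence bP: "cdf_nat r b > x" unfolding b_def by (rule LeastI)
  have bmin: "\<And>m. cdf_nat r m > x \<Longrightarrow> b \<le> m" unfolding b_def by (rule Least_le)
  have c0: "cdf_nat r 0 = r 0" by (simp add: cdf_nat_def)
  have b0: "b \<noteq> 0"
  proof
    assume "b = 0" thus False using bP x0 c0 by simp
  qed
  obtain c where bc: "b = Suc c" using b0 by (cases b) auto
  have "cdf_nat r c \<le> x"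
  proof (rule ccontr)
    assume "\<not> cdf_nat r c \<le> x"
    hence "b \<le> c" using bmin by simp
    thus False using bc by simp
  qed
  moreover have "cdf_nat r b = cdf_nat r c + r b"
    unfolding cdf_nat_def bc by simp
  ultimately have "r b > 0" using bP by simp
  hence bN: "b \<in> cdf_nodes r" by (rule pos_node)
  define S where "S = {n \<in> cdf_nodes r. n < b}"
  define a where "a = Max S"
  have Sfin: "finite S" unfolding S_def using nodes_finite by auto
  have "0 \<in> S" unfolding S_def using zero_node b0 by auto
  hence "S \<noteq> {}" by auto
  hence aS: "a \<in> S" unfolding a_def using Sfin Max_in[of S] by auto
  have amax: "\<And>n. n \<in> S \<Longrightarrow> n \<le> a"
    unfolding a_def using Sfin Max_ge[of S] by auto
  have aN: "a \<in> cdf_nodes r" and altb: "a < b" using aS unfolding S_def by auto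
  have gap: "\<And>j. a < j \<Longrightarrow> j < b \<Longrightarrow> r j = 0"
  proof (rule ccontr)
    fix j assume j: "a < j" "j < b" "r j \<noteq> 0"
    hence "j \<in> cdf_nodes r" using r_nonneg[of j] pos_node by force
    hence "j \<le> a" using amax j unfolding S_def by auto
    thus False using j by simp
  qed
  have ca: "cdf_nat r a \<le> x" using bmin[of a] altb by (meson not_le)
  define y where "y = real a + (x - cdf_nat r a) / (cdf_nat r b - cdf_nat r a) * (real b - real a)"
  have dpos: "cdf_nat r b - cdf_nat r a > 0" using bP ca by simp
  have t0: "(x - cdf_nat r a) / (cdf_nat r b - cdf_nat r a) \<ge> 0" using ca dpos by simp
  have t1: "(x - cdf_nat r a) / (cdf_nat r b - cdf_nat r a) < 1" using bP dpos by simp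
  have ba: "real b - real a > 0" using altb by simp
  have "(x - cdf_nat r a) / (cdf_nat r b - cdf_nat r a) * (real b - real a) \<ge> 0"
    using t0 ba by (intro mult_nonneg_nonneg) auto
  hence ay: "real a \<le> y" unfolding y_def by linarith
  have "(x - cdf_nat r a) / (cdf_nat r b - cdf_nat r a) * (real b - real a) < 1 * (real b - real a)"
    using t1 ba by (rule mult_strict_right_mono)
  hence yb: "y < real b" unfolding y_def by simp
  have "Fcdf r y = cdf_nat r a + (y - real a) / (real b - real a) * (cdf_nat r b - cdf_nat r a)"
    using aN bN ay yb gap by (intro F_eval) auto
  also have "(y - real a) / (real b - real a) = (x - cdf_nat r a) / (cdf_nat r b - cdf_nat r a)"
    unfolding y_def using ba by simp
  also have "cdf_nat r a + (x - cdf_nat r a) / (cdf_nat r b - cdf_nat r a) * (cdf_nat r b - cdf_nat r a) = x"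
    using dpos by simp
  finally show ?thesis using ay by (intro exI[of _ y]) auto
qed

lemma F_tail:
  assumes y0: "y \<ge> 0" and yk: "2 * y \<le> real k" and k2: "k \<ge> 2" and x1: "x < 1"
    and Fx: "x \<le> Fcdf r y"
  shows "1 - cdf_nat r (k - 1) \<le> 2 * (1 - x)"
  using F_struct[OF y0]
proof (elim disjE exE conjE)
  fix a assume ay: "real a \<le> y" and z: "\<forall>j. a < j \<longrightarrow> r j = 0"
  have "a \<le> k - 1" using ay yk k2 by linarith
  hence "cdf_nat r (max (k-1) L) = cdf_nat r (k - 1)" using z by (intro cdf_flat) auto
  hence "cdf_nat r (k - 1) = 1" using cdf_ge_L[of "max (k-1) L"] by simp
  thus ?thesis using x1 by simp
next
  fix a b assume ab: "real a \<le> y" "y < real b" and gap: "\<forall>j. a < j \<and> j < b \<longrightarrow> r j = 0"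
    and F1: "Fcdf r y = cdf_nat r a + (y - real a) / (real b - real a) * (cdf_nat r b - cdf_nat r a)"
  have altb: "a < b" using ab by linarith
  have ba: "real b - real a > 0" using altb by simp
  have cab: "cdf_nat r a \<le> cdf_nat r b" using altb by (intro cdf_mono) simp
  have t0: "(y - real a) / (real b - real a) \<ge> 0" using ab ba by simp
  show ?thesis
  proof (cases "b \<le> k - 1")
    case True
    have "(y - real a) / (real b - real a) \<le> 1" using ab ba by simp
    hence "(y - real a) / (real b - real a) * (cdf_nat r b - cdf_nat r a) \<le> cdf_nat r b - cdf_nat r a"
      using cab t0 by (intro mult_left_le_one_le) auto
    hence "Fcdf r y \<le> cdf_nat r b" unfolding F1 by simp
    moreover have "cdf_nat r b \<le> cdf_nat r (k - 1)" using True by (rule cdf_mono)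
    ultimately show ?thesis using Fx x1 by simp
  next
    case False
    have "k \<le> b" using False k2 by simp
    hence "real k \<le> real b" by simp
    hence "2 * (y - real a) \<le> real b - real a" using yk ab by simp
    hence th: "(y - real a) / (real b - real a) \<le> 1/2" using ba by (simp add: field_simps)
    have "a \<le> k - 1" using ab yk k2 by linarith
    hence "cdf_nat r (k - 1) = cdf_nat r a" using gap False by (intro cdf_flat) auto
    moreover have "Fcdf r y \<le> cdf_nat r a + 1/2 * (cdf_nat r b - cdf_nat r a)"
      unfolding F1 using th cab by (intro add_left_mono mult_right_mono) auto
    moreover have "cdf_nat r b \<le> 1" by (rule cdf_le1)
    ultimately have "x \<le> cdf_nat r a + 1/2 * (cdf_nat r b - cdf_nat r a)" "cdf_nat r b \<le> 1"
      "cdf_nat r (k - 1) = cdf_nat r a" using Fx by auto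
    hence "2 * x \<le> cdf_nat r a + cdf_nat r b" "cdf_nat r b \<le> 1" by (simp_all add: field_simps)
    hence "1 - cdf_nat r a \<le> 2 * (1 - x)" by (smt (verit))
    thus ?thesis using \<open>cdf_nat r (k - 1) = cdf_nat r a\<close> by simp
  qed
qed

lemma Finv_tail:
  assumes x1: "x < 1" and k2: "k \<ge> 2" and le: "2 * Finv r x \<le> ereal (real k)"
  shows "1 - cdf_nat r (k - 1) \<le> 2 * (1 - x)"
proof (cases "x < Fcdf r 0")
  case True
  hence "x < r 0" using F0 by simp
  moreover have "cdf_nat r 0 \<le> cdf_nat r (k - 1)" by (rule cdf_mono) simp
  moreover have "cdf_nat r 0 = r 0" by (simp add: cdf_nat_def)
  ultimately have "1 - cdf_nat r (k - 1) \<le> 1 - x" by simp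
  thus ?thesis using x1 by simp
next
  case False
  hence x0: "r 0 \<le> x" using F0 by simp
  have "\<exists>!y. y \<ge> 0 \<and> Fcdf r y = x"
  proof -
    obtain y where y: "y \<ge> 0" "Fcdf r y = x" using F_exists[OF x0 x1] by blast
    moreover have "y' = y" if "y' \<ge> 0" "Fcdf r y' = x" for y'
      using F_unique_aux[of y' y x] F_unique_aux[of y y' x] that y x1
      by (metis linorder_neqE_linordered_idom)
    ultimately show ?thesis by blast
  qed
  hence th: "(THE y. y \<ge> 0 \<and> Fcdf r y = x) \<ge> 0 \<and> Fcdf r (THE y. y \<ge> 0 \<and> Fcdf r y = x) = x"
    by (rule theI')
  define y where "y = (THE y. y \<ge> 0 \<and> Fcdf r y = x)"
  have "Finv r x = ereal y" unfolding Finv_def y_def using False x1 by simp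
  hence "2 * y \<le> real k" using le by simp
  thus ?thesis using F_tail[of y k x] th k2 x1 unfolding y_def by auto
qed

end



lemma card_sum:
  fixes n :: nat and X :: "nat \<Rightarrow> 'b"
  assumes "finite B"
  shows "(\<Sum>j\<in>B. real (card {i\<in>{..<n}. X i = j})) = real (card {i\<in>{..<n}. X i \<in> B})"
  using assms
proof (induction B rule: finite_induct)
  case empty thus ?case by simp
next
  case (insert b B)
  have "{i\<in>{..<n}. X i \<in> insert b B} = {i\<in>{..<n}. X i = b} \<union> {i\<in>{..<n}. X i \<in> B}" by auto
  moreover have "card ({i\<in>{..<n}. X i = b} \<union> {i\<in>{..<n}. X i \<in> B}) =
      card {i\<in>{..<n}. X i = b} + card {i\<in>{..<n}. X i \<in> B}"
  proof (rule card_Un_disjoint)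
    show "finite {i\<in>{..<n}. X i = b}" by (rule finite_subset[of _ "{..<n}"]) auto
    show "finite {i\<in>{..<n}. X i \<in> B}" by (rule finite_subset[of _ "{..<n}"]) auto
  qed (use insert in auto)
  ultimately show ?case using insert by simp
qed

lemma emp_sum:
  assumes "finite B"
  shows "(\<Sum>j\<in>B. empirical n X j) = real (card {i\<in>{..<n}. X i \<in> B}) / real n"
  unfolding empirical_def using card_sum[OF assms, of n X]
  by (simp add: sum_divide_distrib[symmetric])

lemma emp_nonneg: "empirical n X j \<ge> 0"
  unfolding empirical_def by simp

lemma emp_card_le: "real (card {i\<in>{..<n}. X i \<in> B}) \<le> real n"
proof -
  have "card {i\<in>{..<n}. X i \<in> B} \<le> card {..<n}" by (intro card_mono) auto
  thus ?thesis by simp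
qed

lemma hoeff:
  assumes n: "n > 0" and t: "t \<ge> 0"
  shows "measure_pmf.prob (Pi_pmf {..<n} 0 (\<lambda>_. p))
           {X. real (card {i\<in>{..<n}. X i \<in> A}) / real n \<ge> measure_pmf.prob p A + t}
         \<le> exp (-2 * real n * t\<^sup>2)"
proof -
  define \<pi> where "\<pi> = measure_pmf.prob p A"
  have pi01: "\<pi> \<in> {0..1}" unfolding \<pi>_def by auto
  have bern: "map_pmf (\<lambda>x. x \<in> A) p = bernoulli_pmf \<pi>"
  proof (rule pmf_eqI)
    fix b :: bool
    show "pmf (map_pmf (\<lambda>x. x \<in> A) p) b = pmf (bernoulli_pmf \<pi>) b"
    proof (cases b)
      case True
      have "(\<lambda>x. x \<in> A) -` {True} = A" by auto
      thus ?thesis using True pi01 by (simp add: pmf_map \<pi>_def)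
    next
      case False
      have "(\<lambda>x. x \<in> A) -` {False} = UNIV - A" by auto
      moreover have "measure_pmf.prob p (UNIV - A) = 1 - \<pi>"
        unfolding \<pi>_def using measure_pmf.prob_compl[of A p] by simp
      ultimately show ?thesis using False pi01 by (simp add: pmf_map)
    qed
  qed
  have "binomial_pmf n \<pi> = map_pmf (\<lambda>f. card {i\<in>{..<n}. f i}) (Pi_pmf {..<n} (0 \<in> A) (\<lambda>_. bernoulli_pmf \<pi>))"
    by (rule binomial_pmf_altdef') (use pi01 in auto)
  also have "Pi_pmf {..<n} (0 \<in> A) (\<lambda>_. bernoulli_pmf \<pi>) =
      Pi_pmf {..<n} (0 \<in> A) (\<lambda>_. map_pmf (\<lambda>x. x \<in> A) p)" by (simp add: bern)
  also have "\<dots> = map_pmf (\<lambda>h. (\<lambda>x. x \<in> A) \<circ> h) (Pi_pmf {..<n} 0 (\<lambda>_. p))"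
    by (rule Pi_pmf_map) auto
  finally have eq: "binomial_pmf n \<pi> = map_pmf (\<lambda>X. card {i\<in>{..<n}. X i \<in> A}) (Pi_pmf {..<n} 0 (\<lambda>_. p))"
    by (simp add: pmf.map_comp o_def)
  have bd: "binomial_distribution \<pi>" by unfold_locales (use pi01 in auto)
  have "measure_pmf.prob (binomial_pmf n \<pi>) {x. real x / real n \<ge> \<pi> + t} \<le> exp (-2 * real n * t\<^sup>2)"
  proof -
    have "real_of_int (- 2 * int n) * t\<^sup>2 = -2 * real n * t\<^sup>2" by simp
    thus ?thesis using binomial_distribution.prob_ge'[OF bd n t] by (simp only:)
  qed
  also have "measure_pmf.prob (binomial_pmf n \<pi>) {x. real x / real n \<ge> \<pi> + t} =
     measure_pmf.prob (Pi_pmf {..<n} 0 (\<lambda>_. p))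
           ((\<lambda>X. card {i\<in>{..<n}. X i \<in> A}) -` {x. real x / real n \<ge> \<pi> + t})"
    unfolding eq by (rule measure_map_pmf)
  also have "((\<lambda>X. card {i\<in>{..<n}. X i \<in> A}) -` {x. real x / real n \<ge> \<pi> + t}) =
           {X. real (card {i\<in>{..<n}. X i \<in> A}) / real n \<ge> \<pi> + t}" by auto
  finally show ?thesis unfolding \<pi>_def .
qed

lemma comb:
  fixes d :: "nat \<Rightarrow> real"
  assumes C: "(\<Sum>j<k. \<bar>d j\<bar>) + 2 - qS - pS > \<delta>"
    and D: "qS - pS = (\<Sum>j<k. d j)"
    and q: "qS \<ge> 1 - \<delta>/3" and p: "pS > 1 - \<delta>/2" and dpos: "\<delta> > 0"
  shows "\<exists>A. A \<subseteq> {..<k} \<and> A \<noteq> {} \<and> A \<noteq> {..<k} \<and> (\<Sum>j\<in>A. d j) \<ge> \<delta>/6"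
proof (rule ccontr)
  assume nc: "\<not> (\<exists>A. A \<subseteq> {..<k} \<and> A \<noteq> {} \<and> A \<noteq> {..<k} \<and> (\<Sum>j\<in>A. d j) \<ge> \<delta>/6)"
  define P where "P = {j\<in>{..<k}. d j > 0}"
  define Q where "Q = {..<k} - P"
  have PS: "P \<subseteq> {..<k}" unfolding P_def by auto
  have s0: "(\<Sum>j<k. \<bar>d j\<bar>) = (\<Sum>j\<in>P. \<bar>d j\<bar>) + (\<Sum>j\<in>Q. \<bar>d j\<bar>)"
    unfolding Q_def using PS by (metis add.commute finite_lessThan sum.subset_diff)
  have e1: "(\<Sum>j\<in>P. \<bar>d j\<bar>) = (\<Sum>j\<in>P. d j)" by (intro sum.cong) (auto simp: P_def)
  have e2: "(\<Sum>j\<in>Q. \<bar>d j\<bar>) = - (\<Sum>j\<in>Q. d j)"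
  proof -
    have "(\<Sum>j\<in>Q. \<bar>d j\<bar>) = (\<Sum>j\<in>Q. - d j)" by (intro sum.cong) (auto simp: P_def Q_def)
    thus ?thesis by (simp add: sum_negf)
  qed
  have s2: "(\<Sum>j<k. d j) = (\<Sum>j\<in>P. d j) + (\<Sum>j\<in>Q. d j)"
    unfolding Q_def using PS by (metis add.commute finite_lessThan sum.subset_diff)
  have lt: "(\<Sum>j\<in>P. d j) < \<delta>/6 \<or> P = {..<k}"
  proof (cases "P = {}")
    case True
    hence "(\<Sum>j\<in>P. d j) = 0" by simp
    hence False using C D q s0 e1 e2 s2 dpos by simp
    thus ?thesis by simp
  next
    case False
    thus ?thesis using nc PS by (meson not_le)
  qed
  show False
  proof (cases "P = {..<k}")
    case True
    hence "Q = {}" unfolding Q_def by simp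
    hence "(\<Sum>j<k. \<bar>d j\<bar>) = qS - pS" using s0 e1 s2 D by simp
    thus False using C p by linarith
  next
    case False
    hence "(\<Sum>j\<in>P. d j) < \<delta>/6" using lt by simp
    thus False using C D q s0 e1 e2 s2 by linarith
  qed
qed


lemma emp_props:
  fixes X :: "nat \<Rightarrow> nat"
  assumes n: "n > 0"
  defines "L \<equiv> Max (X ` {..<n})"
  shows "\<And>j. empirical n X j \<ge> 0" "\<And>j. j > L \<Longrightarrow> empirical n X j = 0"
    "cdf_nat (empirical n X) L = 1"
proof -
  show "\<And>j. empirical n X j \<ge> 0" by (rule emp_nonneg)
  have XL: "\<And>i. i < n \<Longrightarrow> X i \<le> L" unfolding L_def by (intro Max_ge) auto
  show "\<And>j. j > L \<Longrightarrow> empirical n X j = 0"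
  proof -
    fix j assume j: "j > L"
    have "{i\<in>{..<n}. X i = j} = {}" using XL j by force
    thus "empirical n X j = 0" unfolding empirical_def by simp
  qed
  have "cdf_nat (empirical n X) L = real (card {i\<in>{..<n}. X i \<in> {..L}}) / real n"
    unfolding cdf_nat_def by (rule emp_sum) simp
  also have "{i\<in>{..<n}. X i \<in> {..L}} = {..<n}" using XL by auto
  finally show "cdf_nat (empirical n X) L = 1" using n by simp
qed

lemma l1_bound:
  fixes X :: "nat \<Rightarrow> nat" and p :: "nat pmf"
  assumes n: "n > 0"
  shows "l1_dist (empirical n X) p \<le> (\<Sum>j<k. \<bar>empirical n X j - pmf p j\<bar>)
            + (1 - (\<Sum>j<k. empirical n X j)) + (1 - measure_pmf.prob p {..<k})"
    (is "_ \<le> ?C")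
proof -
  define q where "q = empirical n X"
  define f where "f = (\<lambda>j. \<bar>q j - pmf p j\<bar>)"
  have bound: "(\<Sum>j<m. f j) \<le> ?C" for m
  proof -
    define M where "M = max m k"
    have MU: "{..<M} = {..<k} \<union> {k..<M}" unfolding M_def by auto
    have "(\<Sum>j<m. f j) \<le> (\<Sum>j<M. f j)"
      unfolding f_def M_def by (intro sum_mono2) auto
    also have "(\<Sum>j<M. f j) = (\<Sum>j<k. f j) + (\<Sum>j\<in>{k..<M}. f j)"
      unfolding MU by (rule sum.union_disjoint) auto
    also have "(\<Sum>j\<in>{k..<M}. f j) \<le> (\<Sum>j\<in>{k..<M}. q j) + (\<Sum>j\<in>{k..<M}. pmf p j)"
    proof -
      have "(\<Sum>j\<in>{k..<M}. f j) \<le> (\<Sum>j\<in>{k..<M}. q j + pmf p j)"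
      proof (rule sum_mono)
        fix j
        have "q j \<ge> 0" unfolding q_def by (rule emp_nonneg)
        thus "f j \<le> q j + pmf p j" unfolding f_def using pmf_nonneg[of p j] by linarith
      qed
      thus ?thesis by (simp add: sum.distrib)
    qed
    also have "(\<Sum>j\<in>{k..<M}. q j) \<le> 1 - (\<Sum>j<k. q j)"
    proof -
      have "(\<Sum>j<M. q j) = (\<Sum>j<k. q j) + (\<Sum>j\<in>{k..<M}. q j)"
        unfolding MU by (rule sum.union_disjoint) auto
      moreover have "(\<Sum>j<M. q j) = real (card {i\<in>{..<n}. X i \<in> {..<M}}) / real n"
        unfolding q_def by (rule emp_sum) simp
      moreover have "real (card {i\<in>{..<n}. X i \<in> {..<M}}) / real n \<le> 1"
        using emp_card_le[of n X "{..<M}"] n by simp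
      ultimately show ?thesis by linarith
    qed
    also have "(\<Sum>j\<in>{k..<M}. pmf p j) \<le> 1 - measure_pmf.prob p {..<k}"
    proof -
      have "(\<Sum>j\<in>{k..<M}. pmf p j) = measure_pmf.prob p {k..<M}"
        by (simp add: measure_measure_pmf_finite)
      also have "\<dots> \<le> measure_pmf.prob p (UNIV - {..<k})"
        by (intro measure_pmf.finite_measure_mono) auto
      also have "\<dots> = 1 - measure_pmf.prob p {..<k}"
        using measure_pmf.prob_compl[of "{..<k}" p] by simp
      finally show ?thesis .
    qed
    finally show ?thesis unfolding f_def q_def by linarith
  qed
  have fnn: "\<And>j. f j \<ge> 0" unfolding f_def by simp
  have "summable f" by (rule summableI_nonneg_bounded[OF fnn bound])
  hence "suminf f \<le> ?C" by (rule suminf_le_const) (rule bound)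
  thus ?thesis unfolding l1_dist_def f_def q_def .
qed

theorem lemma4:
  fixes p :: "nat pmf" and \<delta> :: real and k :: nat and n :: nat
  assumes "\<delta> > 0" and "k \<ge> 2"
  shows "measure_pmf.prob (Pi_pmf {..<n} 0 (\<lambda>_. p))
           {X. l1_dist (empirical n X) p > \<delta> \<and>
               2 * Finv (empirical n X) (1 - \<delta> / 6) \<le> ereal (real k)}
         \<le> (2 ^ k - 2) * exp (- (real n * \<delta>\<^sup>2 / 18))"
proof -
  have dpos: "\<delta> > 0" and k2: "k \<ge> 2" using assms by auto
  define Pm where "Pm = Pi_pmf {..<n} 0 (\<lambda>_. p)"
  define Ev where "Ev = {X. l1_dist (empirical n X) p > \<delta> \<and>
               2 * Finv (empirical n X) (1 - \<delta> / 6) \<le> ereal (real k)}"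
  have "(2::real) ^ 2 \<le> 2 ^ k" using k2 by (intro power_increasing) auto
  hence c2: "(2::real) ^ k - 2 \<ge> 2" by simp
  define E where "E = (\<lambda>A. {X. real (card {i\<in>{..<n}. X i \<in> A}) / real n \<ge> measure_pmf.prob p A + \<delta>/6})"
  have expeq: "exp (-2 * real n * (\<delta>/6)\<^sup>2) = exp (- (real n * \<delta>\<^sup>2 / 18))"
    by (simp add: power2_eq_square)
  show ?thesis
  proof (cases "n = 0")
    case True
    have "measure_pmf.prob Pm Ev \<le> 1" by simp
    also have "1 \<le> (2 ^ k - 2) * exp (- (real n * \<delta>\<^sup>2 / 18))" using True c2 by simp
    finally show ?thesis unfolding Pm_def Ev_def .
  next
    case False
    hence n: "n > 0" by simp
    define S where "S = {..<k}"
    define pS where "pS = measure_pmf.prob p S"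
    have hE: "measure_pmf.prob Pm (E A) \<le> exp (- (real n * \<delta>\<^sup>2 / 18))" for A
      unfolding Pm_def E_def expeq[symmetric] by (rule hoeff[OF n]) (use dpos in simp)
    have key: "(\<Sum>j<k. empirical n X j) \<ge> 1 - \<delta>/3 \<and>
       \<delta> < (\<Sum>j<k. \<bar>empirical n X j - pmf p j\<bar>) + (1 - (\<Sum>j<k. empirical n X j)) + (1 - pS)"
      if X: "X \<in> Ev" for X
    proof
      define L where "L = Max (X ` {..<n})"
      note pr = emp_props[OF n, of X, folded L_def]
      have "1 - cdf_nat (empirical n X) (k - 1) \<le> 2 * (1 - (1 - \<delta> / 6))"
        using Finv_tail[of "empirical n X" L "1 - \<delta>/6" k] pr X k2 dpos unfolding Ev_def by auto
      moreover have "{..k - 1} = {..<k}" using k2 by auto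
      hence "cdf_nat (empirical n X) (k - 1) = (\<Sum>j<k. empirical n X j)" unfolding cdf_nat_def by simp
      ultimately show "(\<Sum>j<k. empirical n X j) \<ge> 1 - \<delta>/3" by simp
      show "\<delta> < (\<Sum>j<k. \<bar>empirical n X j - pmf p j\<bar>) + (1 - (\<Sum>j<k. empirical n X j)) + (1 - pS)"
        using l1_bound[OF n, of X p k] X unfolding Ev_def pS_def S_def by simp
    qed
    have qsum: "(\<Sum>j\<in>A. empirical n X j) = real (card {i\<in>{..<n}. X i \<in> A}) / real n"
      if "A \<subseteq> S" for A X
      by (rule emp_sum) (use that in \<open>auto simp: S_def intro: finite_subset\<close>)
    show ?thesis
    proof (cases "pS \<le> 1 - \<delta>/2")
      case True
      have "Ev \<subseteq> E S"
      proof
        fix X assume X: "X \<in> Ev"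
        have "(\<Sum>j<k. empirical n X j) \<ge> 1 - \<delta>/3" using key[OF X] by simp
        hence "(\<Sum>j\<in>S. empirical n X j) \<ge> pS + \<delta>/6" using True unfolding S_def by simp
        thus "X \<in> E S" unfolding E_def using qsum[of S X] unfolding pS_def by simp
      qed
      hence "measure_pmf.prob Pm Ev \<le> measure_pmf.prob Pm (E S)"
        by (intro measure_pmf.finite_measure_mono) auto
      also have "\<dots> \<le> exp (- (real n * \<delta>\<^sup>2 / 18))" by (rule hE)
      also have "\<dots> \<le> (2 ^ k - 2) * exp (- (real n * \<delta>\<^sup>2 / 18))"
        using c2 by simp
      finally show ?thesis unfolding Pm_def Ev_def .
    next
      case False
      define F where "F = Pow S - {{}, S}"
      have finF: "finite F" unfolding F_def S_def by simp
      have "Ev \<subseteq> (\<Union>A\<in>F. E A)"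
      proof
        fix X assume X: "X \<in> Ev"
        define d where "d = (\<lambda>j. empirical n X j - pmf p j)"
        have D: "(\<Sum>j<k. empirical n X j) - pS = (\<Sum>j<k. d j)"
          unfolding d_def pS_def S_def by (simp add: sum_subtractf measure_measure_pmf_finite)
        obtain A where A: "A \<subseteq> {..<k}" "A \<noteq> {}" "A \<noteq> {..<k}" "(\<Sum>j\<in>A. d j) \<ge> \<delta>/6"
          using comb[where k=k and d=d and qS="\<Sum>j<k. empirical n X j" and pS=pS and \<delta>=\<delta>] key[OF X] D False dpos
          unfolding d_def by auto
        have AF: "A \<in> F" unfolding F_def S_def using A by auto
        have "(\<Sum>j\<in>A. d j) = (\<Sum>j\<in>A. empirical n X j) - measure_pmf.prob p A"
        proof -
          have "finite A" using A(1) finite_subset by blast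
          thus ?thesis unfolding d_def by (simp add: sum_subtractf measure_measure_pmf_finite)
        qed
        moreover have "(\<Sum>j\<in>A. empirical n X j) = real (card {i\<in>{..<n}. X i \<in> A}) / real n"
          using qsum[of A X] A(1) unfolding S_def by simp
        ultimately have "measure_pmf.prob p A + \<delta>/6 \<le> real (card {i\<in>{..<n}. X i \<in> A}) / real n"
          using A(4) by linarith
        hence "X \<in> E A" unfolding E_def by simp
        thus "X \<in> (\<Union>A\<in>F. E A)" using AF by blast
      qed
      hence "measure_pmf.prob Pm Ev \<le> measure_pmf.prob Pm (\<Union>A\<in>F. E A)"
        by (intro measure_pmf.finite_measure_mono) auto
      also have "\<dots> \<le> (\<Sum>A\<in>F. measure_pmf.prob Pm (E A))"
        by (rule measure_pmf.finite_measure_subadditive_finite[OF finF]) auto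
      also have "\<dots> \<le> (\<Sum>A\<in>F. exp (- (real n * \<delta>\<^sup>2 / 18)))"
        by (intro sum_mono hE)
      also have "\<dots> = real (card F) * exp (- (real n * \<delta>\<^sup>2 / 18))" by simp
      also have "card F = 2 ^ k - 2"
      proof -
        have sub: "{{}, S} \<subseteq> Pow S" by auto
        have "0 \<in> S" unfolding S_def using k2 by simp
        hence "S \<noteq> {}" by blast
        hence c: "card {{}, S} = 2" by simp
        have "card F = card (Pow S) - card {{}, S}"
          unfolding F_def by (rule card_Diff_subset) (use sub in auto)
        thus ?thesis using c by (simp add: card_Pow S_def)
      qed
      also have "real (2 ^ k - 2 :: nat) = 2 ^ k - 2"
      proof -
        have "(2::nat) ^ 2 \<le> 2 ^ k" using k2 by (intro power_increasing) auto
        hence "2 \<le> (2::nat) ^ k" by simp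
        thus ?thesis by (simp add: of_nat_diff)
      qed
      finally show ?thesis unfolding Pm_def Ev_def .
    qed
  qed
qed

end
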